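(* Let $\Gamma$ be a finite multiset of formulas and $A$ a formula. If $\Gamma \vdash_c A$ and $(\mathcal{V}^-(\Gamma) \cup \mathcal{V}^+(A)) \cap (\mathcal{V}^+_{ns}(\Gamma) \cup \mathcal{V}^-(A)) = \emptyset$, then $\Gamma \vdash_i A$.
   Context: Formulas are built from propositional variables and $\bot$ using $\land$, $\lor$, $\to$; $\lnot A$ abbreviates $A \to \bot$. $\vdash_c$ and $\vdash_i$ denote derivability in classical and intuitionistic propositional logic respectively. The sets $\mathcal{V}^+(A)$, $\mathcal{V}^-(A)$ of variables occurring positively, negatively in $A$ are defined simultaneously by: $\mathcal{V}^+(p)=\{p\}$, $\mathcal{V}^+(\bot)=\emptyset$, $\mathcal{V}^+(A\land B)=\mathcal{V}^+(A\lor B)=\mathcal{V}^+(A)\cup\mathcal{V}^+(B)$, $\mathcal{V}^+(A\to B)=\mathcal{V}^-(A)\cup\mathcal{V}^+(B)$; $\mathcal{V}^-(p)=\mathcal{V}^-(\bot)=\emptyset$, $\mathcal{V}^-(A\land B)=\mathcal{V}^-(A\lor B)=\mathcal{V}^-(A)\cup\mathcal{V}^-(B)$, $\mathcal{V}^-(A\to B)=\mathcal{V}^+(A)\cup\mathcal{V}^-(B)$. The set $\mathcal{V}^+_{ns}(A)$ of variables occurring non-strictly positively is defined by $\mathcal{V}^+_{ns}(p)=\mathcal{V}^+_{ns}(\bot)=\emptyset$, $\mathcal{V}^+_{ns}(A\land B)=\mathcal{V}^+_{ns}(A\lor B)=\mathcal{V}^+_{ns}(A)\cup\mathcal{V}^+_{ns}(B)$,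 $\mathcal{V}^+_{ns}(A\to B)=\mathcal{V}^-(A)\cup\mathcal{V}^+_{ns}(B)$. For a finite multiset $\Gamma$, $\mathcal{V}^+(\Gamma)=\bigcup_{A\in\Gamma}\mathcal{V}^+(A)$, and similarly for $\mathcal{V}^-$ and $\mathcal{V}^+_{ns}$. *)

theory Defs
  imports Main "HOL-Library.Multiset"
begin

datatype 'a form =
    Var 'a
  | Bot
  | Conj "'a form" "'a form"
  | Disj "'a form" "'a form"
  | Imp "'a form" "'a form"

definition Neg :: "'a form \<Rightarrow> 'a form" where
  "Neg A = Imp A Bot"

fun Vpos :: "'a form \<Rightarrow> 'a set" and Vneg :: "'a form \<Rightarrow> 'a set" where
  "Vpos (Var p) = {p}"
| "Vpos Bot = {}"
| "Vpos (Conj A B) = Vpos A \<union> Vpos B"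
| "Vpos (Disj A B) = Vpos A \<union> Vpos B"
| "Vpos (Imp A B) = Vneg A \<union> Vpos B"
| "Vneg (Var p) = {}"
| "Vneg Bot = {}"
| "Vneg (Conj A B) = Vneg A \<union> Vneg B"
| "Vneg (Disj A B) = Vneg A \<union> Vneg B"
| "Vneg (Imp A B) = Vpos A \<union> Vneg B"

fun Vpos_ns :: "'a form \<Rightarrow> 'a set" where
  "Vpos_ns (Var p) = {}"
| "Vpos_ns Bot = {}"
| "Vpos_ns (Conj A B) = Vpos_ns A \<union> Vpos_ns B"
| "Vpos_ns (Disj A B) = Vpos_ns A \<union> Vpos_ns B"
| "Vpos_ns (Imp A B) = Vneg A \<union> Vpos_ns B"

definition VposM :: "'a form multiset \<Rightarrow> 'a set" where
  "VposM \<Gamma> = (\<Union>A\<in>set_mset \<Gamma>. Vpos A)"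
definition VnegM :: "'a form multiset \<Rightarrow> 'a set" where
  "VnegM \<Gamma> = (\<Union>A\<in>set_mset \<Gamma>. Vneg A)"
definition Vpos_nsM :: "'a form multiset \<Rightarrow> 'a set" where
  "Vpos_nsM \<Gamma> = (\<Union>A\<in>set_mset \<Gamma>. Vpos_ns A)"

inductive nd :: "bool \<Rightarrow> 'a form multiset \<Rightarrow> 'a form \<Rightarrow> bool" where
  Ax: "A \<in># \<Gamma> \<Longrightarrow> nd c \<Gamma> A"
| BotE: "nd c \<Gamma> Bot \<Longrightarrow> nd c \<Gamma> A"
| ConjI: "nd c \<Gamma> A \<Longrightarrow> nd c \<Gamma> B \<Longrightarrow> nd c \<Gamma> (Conj A B)"
| ConjE1: "nd c \<Gamma> (Conj A B) \<Longrightarrow> nd c \<Gamma> A"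
| ConjE2: "nd c \<Gamma> (Conj A B) \<Longrightarrow> nd c \<Gamma> B"
| DisjI1: "nd c \<Gamma> A \<Longrightarrow> nd c \<Gamma> (Disj A B)"
| DisjI2: "nd c \<Gamma> B \<Longrightarrow> nd c \<Gamma> (Disj A B)"
| DisjE: "nd c \<Gamma> (Disj A B) \<Longrightarrow> nd c (add_mset A \<Gamma>) C \<Longrightarrow>
           nd c (add_mset B \<Gamma>) C \<Longrightarrow> nd c \<Gamma> C"
| ImpI: "nd c (add_mset A \<Gamma>) B \<Longrightarrow> nd c \<Gamma> (Imp A B)"
| ImpE: "nd c \<Gamma> (Imp A B) \<Longrightarrow> nd c \<Gamma> A \<Longrightarrow> nd c \<Gamma> B"
| RAA: "nd True (add_mset (Neg A) \<Gamma>) Bot \<Longrightarrow> nd True \<Gamma> A"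

abbreviation derives_c :: "'a form multiset \<Rightarrow> 'a form \<Rightarrow> bool" where
  "derives_c \<Gamma> A \<equiv> nd True \<Gamma> A"
abbreviation derives_i :: "'a form multiset \<Rightarrow> 'a form \<Rightarrow> bool" where
  "derives_i \<Gamma> A \<equiv> nd False \<Gamma> A"

end

theory Submission
  imports Defs
begin

lemma wk: "nd c \<Gamma> A \<Longrightarrow> \<Gamma> \<subseteq># \<Gamma>' \<Longrightarrow> nd c \<Gamma>' A"
proof (induction arbitrary: \<Gamma>' rule: nd.induct)
  case (Ax A \<Gamma> c) then show ?case by (meson mset_subset_eqD nd.Ax)
next
  case (DisjE c \<Gamma> A B C)
  have "add_mset A \<Gamma> \<subseteq># add_mset A \<Gamma>'" "add_mset B \<Gamma> \<subseteq># add_mset B \<Gamma>'" using DisjE by simp_all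
  then show ?case using DisjE nd.DisjE by blast
next
  case (ImpI c A \<Gamma> B) then show ?case by (simp add: nd.ImpI)
next
  case (RAA A \<Gamma>) then show ?case by (simp add: nd.RAA)
qed (auto intro: nd.intros)

lemma cut: "nd c \<Gamma> X \<Longrightarrow> nd c (add_mset X \<Gamma>) E \<Longrightarrow> nd c \<Gamma> E"
  by (metis nd.ImpI nd.ImpE)

definition derivI :: "'a form multiset \<Rightarrow> 'a form multiset \<Rightarrow> bool" where
  "derivI \<Gamma> \<Delta> = (\<forall>\<Theta> E. (\<forall>D\<in>#\<Delta>. nd False (add_mset D (\<Gamma>+\<Theta>)) E) \<longrightarrow> nd False (\<Gamma>+\<Theta>) E)"

lemma botL: "Bot \<in># \<Gamma> \<Longrightarrow> derivI \<Gamma> \<Delta>"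
  unfolding derivI_def by (metis nd.BotE nd.Ax union_iff)

lemma conjL: "derivI (add_mset B (add_mset C \<Gamma>)) \<Delta> \<Longrightarrow> derivI (add_mset (Conj B C) \<Gamma>) \<Delta>"
  unfolding derivI_def
proof (intro allI impI)
  fix \<Theta> E
  assume IH: "\<forall>\<Theta> E. (\<forall>D\<in>#\<Delta>. nd False (add_mset D (add_mset B (add_mset C \<Gamma>) + \<Theta>)) E) \<longrightarrow>
              nd False (add_mset B (add_mset C \<Gamma>) + \<Theta>) E"
    and H: "\<forall>D\<in>#\<Delta>. nd False (add_mset D (add_mset (Conj B C) \<Gamma> + \<Theta>)) E"
  define G where "G = add_mset (Conj B C) \<Gamma> + \<Theta>"
  have "\<forall>D\<in>#\<Delta>. nd False (add_mset D (add_mset B (add_mset C \<Gamma>) + add_mset (Conj B C) \<Theta>)) E"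
    using H by (auto elim!: wk simp: add_mset_commute)
  with IH have K: "nd False (add_mset B (add_mset C \<Gamma>) + add_mset (Conj B C) \<Theta>) E" by blast
  have K2: "nd False (add_mset B (add_mset C G)) E"
    using K unfolding G_def by (auto elim!: wk simp: add_mset_commute)
  have "nd False (add_mset C G) B" unfolding G_def by (rule nd.ConjE1[of _ _ _ C]) (auto intro: nd.Ax)
  with K2 have "nd False (add_mset C G) E" using cut by blast
  moreover have "nd False G C" unfolding G_def by (rule nd.ConjE2[of _ _ B]) (auto intro: nd.Ax)
  ultimately show "nd False (add_mset (Conj B C) \<Gamma> + \<Theta>) E" using cut unfolding G_def by blast
qed

lemma disjL: "derivI (add_mset B \<Gamma>) \<Delta> \<Longrightarrow> derivI (add_mset C \<Gamma>) \<Delta> \<Longrightarrow> derivI (add_mset (Disj B C) \<Gamma>) \<Delta>"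
  unfolding derivI_def
proof (intro allI impI)
  fix \<Theta> E
  assume IH1: "\<forall>\<Theta> E. (\<forall>D\<in>#\<Delta>. nd False (add_mset D (add_mset B \<Gamma> + \<Theta>)) E) \<longrightarrow>
              nd False (add_mset B \<Gamma> + \<Theta>) E"
    and IH2: "\<forall>\<Theta> E. (\<forall>D\<in>#\<Delta>. nd False (add_mset D (add_mset C \<Gamma> + \<Theta>)) E) \<longrightarrow>
              nd False (add_mset C \<Gamma> + \<Theta>) E"
    and H: "\<forall>D\<in>#\<Delta>. nd False (add_mset D (add_mset (Disj B C) \<Gamma> + \<Theta>)) E"
  have "\<forall>D\<in>#\<Delta>. nd False (add_mset D (add_mset B \<Gamma> + add_mset (Disj B C) \<Theta>)) E"
    using H by (auto elim!: wk simp: add_mset_commute)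
  with IH1 have 1: "nd False (add_mset B \<Gamma> + add_mset (Disj B C) \<Theta>) E" by blast
  have "\<forall>D\<in>#\<Delta>. nd False (add_mset D (add_mset C \<Gamma> + add_mset (Disj B C) \<Theta>)) E"
    using H by (auto elim!: wk simp: add_mset_commute)
  with IH2 have 2: "nd False (add_mset C \<Gamma> + add_mset (Disj B C) \<Theta>) E" by blast
  show "nd False (add_mset (Disj B C) \<Gamma> + \<Theta>) E"
    apply (rule nd.DisjE[of _ _ B C])
      apply (auto intro: nd.Ax)[1]
    using 1 2 by (auto elim!: wk simp: add_mset_commute)
qed

lemma impL: "derivI \<Gamma> (add_mset B \<Delta>) \<Longrightarrow> derivI (add_mset C \<Gamma>) \<Delta> \<Longrightarrow> derivI (add_mset (Imp B C) \<Gamma>) \<Delta>"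
  unfolding derivI_def
proof (intro allI impI)
  fix \<Theta> E
  assume IH1: "\<forall>\<Theta> E. (\<forall>D\<in>#add_mset B \<Delta>. nd False (add_mset D (\<Gamma> + \<Theta>)) E) \<longrightarrow>
              nd False (\<Gamma> + \<Theta>) E"
    and IH2: "\<forall>\<Theta> E. (\<forall>D\<in>#\<Delta>. nd False (add_mset D (add_mset C \<Gamma> + \<Theta>)) E) \<longrightarrow>
              nd False (add_mset C \<Gamma> + \<Theta>) E"
    and H: "\<forall>D\<in>#\<Delta>. nd False (add_mset D (add_mset (Imp B C) \<Gamma> + \<Theta>)) E"
  have "\<forall>D\<in>#\<Delta>. nd False (add_mset D (add_mset C \<Gamma> + add_mset (Imp B C) \<Theta>)) E"
    using H by (auto elim!: wk simp: add_mset_commute)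
  with IH2 have F: "nd False (add_mset C \<Gamma> + add_mset (Imp B C) \<Theta>) E" by blast
  have "nd False (add_mset B (\<Gamma> + add_mset (Imp B C) \<Theta>)) C"
    by (rule nd.ImpE[of _ _ B]) (auto intro: nd.Ax)
  moreover have "nd False (add_mset C (add_mset B (\<Gamma> + add_mset (Imp B C) \<Theta>))) E"
    using F by (auto elim!: wk simp: add_mset_commute)
  ultimately have "nd False (add_mset B (\<Gamma> + add_mset (Imp B C) \<Theta>)) E" using cut by blast
  moreover have "\<forall>D\<in>#\<Delta>. nd False (add_mset D (\<Gamma> + add_mset (Imp B C) \<Theta>)) E"
    using H by (auto elim!: wk simp: add_mset_commute)
  ultimately have "nd False (\<Gamma> + add_mset (Imp B C) \<Theta>) E" using IH1[rule_format, of "add_mset (Imp B C) \<Theta>" E] by auto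
  then show "nd False (add_mset (Imp B C) \<Gamma> + \<Theta>) E" by (auto elim!: wk)
qed

lemma subR: "derivI \<Gamma> \<Delta>' \<Longrightarrow> \<Delta>' \<subseteq># \<Delta> \<Longrightarrow> derivI \<Gamma> \<Delta>"
  unfolding derivI_def by (meson mset_subset_eqD)

lemma conjR: "derivI \<Gamma> (add_mset B \<Delta>) \<Longrightarrow> derivI \<Gamma> (add_mset C \<Delta>) \<Longrightarrow> derivI \<Gamma> (add_mset (Conj B C) \<Delta>)"
  unfolding derivI_def
proof (intro allI impI)
  fix \<Theta> E
  assume IH1: "\<forall>\<Theta> E. (\<forall>D\<in>#add_mset B \<Delta>. nd False (add_mset D (\<Gamma> + \<Theta>)) E) \<longrightarrow>
              nd False (\<Gamma> + \<Theta>) E"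
    and IH2: "\<forall>\<Theta> E. (\<forall>D\<in>#add_mset C \<Delta>. nd False (add_mset D (\<Gamma> + \<Theta>)) E) \<longrightarrow>
              nd False (\<Gamma> + \<Theta>) E"
    and H: "\<forall>D\<in>#add_mset (Conj B C) \<Delta>. nd False (add_mset D (\<Gamma> + \<Theta>)) E"
  have "nd False (add_mset C (\<Gamma> + add_mset B \<Theta>)) (Conj B C)"
    by (rule nd.ConjI) (auto intro: nd.Ax)
  moreover have "nd False (add_mset (Conj B C) (add_mset C (\<Gamma> + add_mset B \<Theta>))) E"
    using H by (auto elim!: wk simp: add_mset_commute)
  ultimately have "nd False (add_mset C (\<Gamma> + add_mset B \<Theta>)) E" using cut by blast
  moreover have "\<forall>D\<in>#\<Delta>. nd False (add_mset D (\<Gamma> + add_mset B \<Theta>)) E"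
  proof
    fix D assume "D \<in># \<Delta>"
    then have "nd False (add_mset D (\<Gamma> + \<Theta>)) E" using H by simp
    then show "nd False (add_mset D (\<Gamma> + add_mset B \<Theta>)) E" by (rule wk) simp
  qed
  ultimately have "nd False (\<Gamma> + add_mset B \<Theta>) E" using IH2[rule_format, of "add_mset B \<Theta>" E] by auto
  then have "nd False (add_mset B (\<Gamma> + \<Theta>)) E" by (auto elim!: wk)
  then show "nd False (\<Gamma> + \<Theta>) E" using IH1 H by auto
qed

lemma disjR: "derivI \<Gamma> (add_mset B (add_mset C \<Delta>)) \<Longrightarrow> derivI \<Gamma> (add_mset (Disj B C) \<Delta>)"
  unfolding derivI_def
proof (intro allI impI)
  fix \<Theta> E
  assume IH: "\<forall>\<Theta> E. (\<forall>D\<in>#add_mset B (add_mset C \<Delta>). nd False (add_mset D (\<Gamma> + \<Theta>)) E) \<longrightarrow>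
              nd False (\<Gamma> + \<Theta>) E"
    and H: "\<forall>D\<in>#add_mset (Disj B C) \<Delta>. nd False (add_mset D (\<Gamma> + \<Theta>)) E"
  have "nd False (add_mset B (\<Gamma> + \<Theta>)) E"
    apply (rule cut[of _ _ "Disj B C"])
     apply (rule nd.DisjI1) apply (auto intro: nd.Ax)[1]
    using H by (auto elim!: wk simp: add_mset_commute)
  moreover have "nd False (add_mset C (\<Gamma> + \<Theta>)) E"
    apply (rule cut[of _ _ "Disj B C"])
     apply (rule nd.DisjI2) apply (auto intro: nd.Ax)[1]
    using H by (auto elim!: wk simp: add_mset_commute)
  ultimately show "nd False (\<Gamma> + \<Theta>) E" using IH H by auto
qed

lemma impR: "derivI (add_mset B \<Gamma>) {#C#} \<Longrightarrow> derivI \<Gamma> (add_mset (Imp B C) \<Delta>)"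
  unfolding derivI_def
proof (intro allI impI)
  fix \<Theta> E
  assume IH: "\<forall>\<Theta> E. (\<forall>D\<in>#{#C#}. nd False (add_mset D (add_mset B \<Gamma> + \<Theta>)) E) \<longrightarrow>
              nd False (add_mset B \<Gamma> + \<Theta>) E"
    and H: "\<forall>D\<in>#add_mset (Imp B C) \<Delta>. nd False (add_mset D (\<Gamma> + \<Theta>)) E"
  have "nd False (add_mset C (add_mset B \<Gamma> + {#})) C" by (rule nd.Ax) simp
  then have "nd False (add_mset B \<Gamma> + {#}) C" using IH[rule_format, of "{#}" C] by simp
  then have "nd False (\<Gamma> + \<Theta>) (Imp B C)" by (auto intro!: nd.ImpI elim!: wk)
  then show "nd False (\<Gamma> + \<Theta>) E" using H cut by auto
qed

lemma atomR: "Var p \<in># \<Gamma> \<Longrightarrow> Var p \<in># \<Delta> \<Longrightarrow> derivI \<Gamma> \<Delta>"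
  unfolding derivI_def by (meson cut nd.Ax union_iff)

fun eval :: "('a \<Rightarrow> bool) \<Rightarrow> 'a form \<Rightarrow> bool" where
  "eval v (Var p) = v p"
| "eval v Bot = False"
| "eval v (Conj A B) = (eval v A \<and> eval v B)"
| "eval v (Disj A B) = (eval v A \<or> eval v B)"
| "eval v (Imp A B) = (eval v A \<longrightarrow> eval v B)"

lemma sound: "nd c \<Gamma> A \<Longrightarrow> \<forall>F\<in>#\<Gamma>. eval v F \<Longrightarrow> eval v A"
  by (induction rule: nd.induct) (auto simp: Neg_def)

definition valid :: "'a form multiset \<Rightarrow> 'a form multiset \<Rightarrow> bool" where
  "valid \<Gamma> \<Delta> = (\<forall>v. (\<forall>F\<in>#\<Gamma>. eval v F) \<longrightarrow> (\<exists>D\<in>#\<Delta>. eval v D))"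

definition VposMD :: "'a form multiset \<Rightarrow> 'a set" where
  "VposMD \<Delta> = (\<Union>A\<in>set_mset \<Delta>. Vpos A)"

definition cond :: "'a form multiset \<Rightarrow> 'a form multiset \<Rightarrow> bool" where
  "cond \<Gamma> \<Delta> = ((VnegM \<Gamma> \<union> VposM \<Delta>) \<inter> (Vpos_nsM \<Gamma> \<union> VnegM \<Delta>) = {})"

lemma VM_simps[simp]:
  "VnegM (add_mset F \<Gamma>) = Vneg F \<union> VnegM \<Gamma>" "VnegM {#} = {}"
  "VposM (add_mset F \<Gamma>) = Vpos F \<union> VposM \<Gamma>" "VposM {#} = {}"
  "Vpos_nsM (add_mset F \<Gamma>) = Vpos_ns F \<union> Vpos_nsM \<Gamma>" "Vpos_nsM {#} = {}"
  by (auto simp: VnegM_def VposM_def Vpos_nsM_def)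

lemma Vpos_ns_sub: "Vpos_ns F \<subseteq> Vpos F"
  by (induction F) auto

lemma mono_eval: "(\<forall>p\<in>Vpos F. u p \<longrightarrow> w p) \<Longrightarrow> (\<forall>p\<in>Vneg F. w p \<longrightarrow> u p) \<Longrightarrow> eval u F \<Longrightarrow> eval w F"
proof (induction F arbitrary: u w)
  case (Imp B C)
  show ?case
  proof (simp, intro impI)
    assume "eval w B"
    then have "eval u B" using Imp.IH(1)[of w u] Imp.prems by auto
    then have "eval u C" using Imp.prems by simp
    then show "eval w C" using Imp.IH(2)[of u w] Imp.prems by auto
  qed
next
  case (Conj B C)
  have "eval w B" using Conj.IH(1)[of u w] Conj.prems by auto
  moreover have "eval w C" using Conj.IH(2)[of u w] Conj.prems by auto
  ultimately show ?case by simp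
next
  case (Disj B C)
  show ?case
  proof (cases "eval u B")
    case True then show ?thesis using Disj.IH(1)[of u w] Disj.prems by auto
  next
    case False then show ?thesis using Disj.IH(2)[of u w] Disj.prems by auto
  qed
qed auto

fun fsz :: "'a form \<Rightarrow> nat" where
  "fsz (Var p) = 1"
| "fsz Bot = 1"
| "fsz (Conj A B) = fsz A + fsz B + 1"
| "fsz (Disj A B) = fsz A + fsz B + 1"
| "fsz (Imp A B) = fsz A + fsz B + 1"

definition msz :: "'a form multiset \<Rightarrow> nat" where
  "msz \<Gamma> = sum_mset (image_mset fsz \<Gamma>)"

lemma msz_simps[simp]: "msz (add_mset F \<Gamma>) = fsz F + msz \<Gamma>" "msz {#} = 0"
  by (auto simp: msz_def)

definition isVar :: "'a form \<Rightarrow> bool" where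
  "isVar F = (\<exists>p. F = Var p)"

lemma split_imp:
  assumes c: "cond \<Gamma> (add_mset (Imp B C) \<Delta>)"
    and vars: "\<forall>F\<in>#\<Gamma>. isVar F"
    and v: "valid \<Gamma> (add_mset (Imp B C) \<Delta>)"
  shows "valid (add_mset B \<Gamma>) {#C#} \<or> valid \<Gamma> \<Delta>"
proof (rule ccontr)
  assume "\<not> ?thesis"
  then obtain v1 v2 where v1: "\<forall>F\<in>#\<Gamma>. eval v1 F" "eval v1 B" "\<not> eval v1 C"
    and v2: "\<forall>F\<in>#\<Gamma>. eval v2 F" "\<forall>D\<in>#\<Delta>. \<not> eval v2 D"
    unfolding valid_def by auto
  define P where "P = VnegM (add_mset (Imp B C) \<Delta>)"
  define w where "w = (\<lambda>p. if p \<in> P then v1 p \<or> v2 p else v1 p \<and> v2 p)"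
  have dis: "VposM (add_mset (Imp B C) \<Delta>) \<inter> P = {}" using c unfolding cond_def P_def by blast
  have "\<forall>F\<in>#\<Gamma>. eval w F"
  proof
    fix F assume "F \<in># \<Gamma>"
    then obtain p where "F = Var p" using vars unfolding isVar_def by blast
    then show "eval w F" using v1 v2 \<open>F \<in># \<Gamma>\<close> unfolding w_def by fastforce
  qed
  moreover have "eval w B"
    by (rule mono_eval[OF _ _ v1(2)]) (use dis in \<open>auto simp: w_def P_def\<close>)
  moreover have "\<not> eval w C"
  proof
    assume "eval w C"
    then have "eval v1 C"
      by (rule mono_eval[rotated 2]) (use dis in \<open>auto simp: w_def P_def\<close>)
    with v1 show False by simp
  qed
  moreover have "\<forall>D\<in>#\<Delta>. \<not> eval w D"
  proof (intro ballI notI)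
    fix D assume D: "D \<in># \<Delta>" "eval w D"
    have "eval v2 D"
      by (rule mono_eval[OF _ _ D(2)]) (use dis D(1) in \<open>auto simp: w_def P_def VposM_def VnegM_def\<close>)
    with v2 D show False by simp
  qed
  ultimately show False using v unfolding valid_def by auto
qed


lemma pres_conjL: "valid (add_mset (Conj B D) G) \<Delta> \<Longrightarrow> valid (add_mset B (add_mset D G)) \<Delta>"
  "cond (add_mset (Conj B D) G) \<Delta> \<Longrightarrow> cond (add_mset B (add_mset D G)) \<Delta>"
  "msz (add_mset B (add_mset D G)) + msz \<Delta> < msz (add_mset (Conj B D) G) + msz \<Delta>"
  by (auto simp: valid_def cond_def)

lemma pres_disjL: "valid (add_mset (Disj B D) G) \<Delta> \<Longrightarrow> valid (add_mset B G) \<Delta>"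
  "valid (add_mset (Disj B D) G) \<Delta> \<Longrightarrow> valid (add_mset D G) \<Delta>"
  "cond (add_mset (Disj B D) G) \<Delta> \<Longrightarrow> cond (add_mset B G) \<Delta>"
  "cond (add_mset (Disj B D) G) \<Delta> \<Longrightarrow> cond (add_mset D G) \<Delta>"
  "msz (add_mset B G) + msz \<Delta> < msz (add_mset (Disj B D) G) + msz \<Delta>"
  "msz (add_mset D G) + msz \<Delta> < msz (add_mset (Disj B D) G) + msz \<Delta>"
  by (auto simp: valid_def cond_def)

lemma pres_impL: "valid (add_mset (Imp B D) G) \<Delta> \<Longrightarrow> valid G (add_mset B \<Delta>)"
  "valid (add_mset (Imp B D) G) \<Delta> \<Longrightarrow> valid (add_mset D G) \<Delta>"
  "cond (add_mset (Imp B D) G) \<Delta> \<Longrightarrow> cond G (add_mset B \<Delta>)"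
  "cond (add_mset (Imp B D) G) \<Delta> \<Longrightarrow> cond (add_mset D G) \<Delta>"
  "msz G + msz (add_mset B \<Delta>) < msz (add_mset (Imp B D) G) + msz \<Delta>"
  "msz (add_mset D G) + msz \<Delta> < msz (add_mset (Imp B D) G) + msz \<Delta>"
  by (auto simp: valid_def cond_def)

lemma pres_botR: "valid \<Gamma> (add_mset Bot H) \<Longrightarrow> valid \<Gamma> H"
  "cond \<Gamma> (add_mset Bot H) \<Longrightarrow> cond \<Gamma> H"
  "msz \<Gamma> + msz H < msz \<Gamma> + msz (add_mset Bot H)"
  by (auto simp: valid_def cond_def)

lemma pres_conjR: "valid \<Gamma> (add_mset (Conj B D) H) \<Longrightarrow> valid \<Gamma> (add_mset B H)"
  "valid \<Gamma> (add_mset (Conj B D) H) \<Longrightarrow> valid \<Gamma> (add_mset D H)"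
  "cond \<Gamma> (add_mset (Conj B D) H) \<Longrightarrow> cond \<Gamma> (add_mset B H)"
  "cond \<Gamma> (add_mset (Conj B D) H) \<Longrightarrow> cond \<Gamma> (add_mset D H)"
  "msz \<Gamma> + msz (add_mset B H) < msz \<Gamma> + msz (add_mset (Conj B D) H)"
  "msz \<Gamma> + msz (add_mset D H) < msz \<Gamma> + msz (add_mset (Conj B D) H)"
  by (auto simp: valid_def cond_def)

lemma pres_disjR: "valid \<Gamma> (add_mset (Disj B D) H) \<Longrightarrow> valid \<Gamma> (add_mset B (add_mset D H))"
  "cond \<Gamma> (add_mset (Disj B D) H) \<Longrightarrow> cond \<Gamma> (add_mset B (add_mset D H))"
  "msz \<Gamma> + msz (add_mset B (add_mset D H)) < msz \<Gamma> + msz (add_mset (Disj B D) H)"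
  by (auto simp: valid_def cond_def)

lemma pres_impR:
  "cond \<Gamma> (add_mset (Imp B D) H) \<Longrightarrow> cond (add_mset B \<Gamma>) {#D#}"
  "msz (add_mset B \<Gamma>) + msz {#D#} < msz \<Gamma> + msz (add_mset (Imp B D) H)"
  "cond \<Gamma> (add_mset (Imp B D) H) \<Longrightarrow> cond \<Gamma> H"
  "msz \<Gamma> + msz H < msz \<Gamma> + msz (add_mset (Imp B D) H)"
  using Vpos_ns_sub[of B] by (auto simp: cond_def)

lemma main: "valid \<Gamma> \<Delta> \<Longrightarrow> cond \<Gamma> \<Delta> \<Longrightarrow> derivI \<Gamma> \<Delta>"
proof (induction "msz \<Gamma> + msz \<Delta>" arbitrary: \<Gamma> \<Delta> rule: less_induct)
  case less
  note V = less.prems(1) and C = less.prems(2)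
  show ?case
  proof (cases "\<exists>F\<in>#\<Gamma>. \<not> isVar F")
    case True
    then obtain F where F: "F \<in># \<Gamma>" "\<not> isVar F" by blast
    define G where "G = \<Gamma> - {#F#}"
    have G: "\<Gamma> = add_mset F G" using F(1) unfolding G_def by simp
    show ?thesis
    proof (cases F)
      case (Var p) with F(2) show ?thesis unfolding isVar_def by blast
    next
      case Bot show ?thesis by (rule botL) (use F Bot in simp)
    next
      case (Conj B D)
      have "derivI (add_mset B (add_mset D G)) \<Delta>"
        apply (rule less.hyps)
        using pres_conjL[where B=B and D=D and G=G and \<Delta>=\<Delta>] V C unfolding G Conj by (blast+)
      then show ?thesis unfolding G Conj by (rule conjL)
    next
      case (Disj B D)
      have "derivI (add_mset B G) \<Delta>"
        apply (rule less.hyps)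
        using pres_disjL[where B=B and D=D and G=G and \<Delta>=\<Delta>] V C unfolding G Disj by (blast+)
      moreover have "derivI (add_mset D G) \<Delta>"
        apply (rule less.hyps)
        using pres_disjL[where B=B and D=D and G=G and \<Delta>=\<Delta>] V C unfolding G Disj by (blast+)
      ultimately show ?thesis unfolding G Disj by (rule disjL)
    next
      case (Imp B D)
      have "derivI G (add_mset B \<Delta>)"
        apply (rule less.hyps)
        using pres_impL[where B=B and D=D and G=G and \<Delta>=\<Delta>] V C unfolding G Imp by (blast+)
      moreover have "derivI (add_mset D G) \<Delta>"
        apply (rule less.hyps)
        using pres_impL[where B=B and D=D and G=G and \<Delta>=\<Delta>] V C unfolding G Imp by (blast+)
      ultimately show ?thesis unfolding G Imp by (rule impL)
    qed
  next
    case False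
    then have vars: "\<forall>F\<in>#\<Gamma>. isVar F" by blast
    show ?thesis
    proof (cases "\<exists>F\<in>#\<Delta>. \<not> isVar F")
      case True
      then obtain F where F: "F \<in># \<Delta>" "\<not> isVar F" by blast
      define H where "H = \<Delta> - {#F#}"
      have H: "\<Delta> = add_mset F H" using F(1) unfolding H_def by simp
      show ?thesis
      proof (cases F)
        case (Var p) with F(2) show ?thesis unfolding isVar_def by blast
      next
        case Bot
        have "derivI \<Gamma> H"
          apply (rule less.hyps)
          using pres_botR[where H=H and \<Gamma>=\<Gamma>] V C unfolding H Bot by (blast+)
        then show ?thesis by (rule subR) (simp add: H)
      next
        case (Conj B D)
        have "derivI \<Gamma> (add_mset B H)"
          apply (rule less.hyps)
          using pres_conjR[where B=B and D=D and H=H and \<Gamma>=\<Gamma>] V C unfolding H Conj by (blast+)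
        moreover have "derivI \<Gamma> (add_mset D H)"
          apply (rule less.hyps)
          using pres_conjR[where B=B and D=D and H=H and \<Gamma>=\<Gamma>] V C unfolding H Conj by (blast+)
        ultimately show ?thesis unfolding H Conj by (rule conjR)
      next
        case (Disj B D)
        have "derivI \<Gamma> (add_mset B (add_mset D H))"
          apply (rule less.hyps)
          using pres_disjR[where B=B and D=D and H=H and \<Gamma>=\<Gamma>] V C unfolding H Disj by (blast+)
        then show ?thesis unfolding H Disj by (rule disjR)
      next
        case (Imp B D)
        have C': "cond \<Gamma> (add_mset (Imp B D) H)" using C unfolding H Imp .
        have V': "valid \<Gamma> (add_mset (Imp B D) H)" using V unfolding H Imp .
        have "valid (add_mset B \<Gamma>) {#D#} \<or> valid \<Gamma> H"
          by (rule split_imp[OF C' vars V'])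
        then show ?thesis
        proof
          assume V2: "valid (add_mset B \<Gamma>) {#D#}"
          have "derivI (add_mset B \<Gamma>) {#D#}"
            apply (rule less.hyps)
            using pres_impR[where B=B and D=D and H=H and \<Gamma>=\<Gamma>] V2 C unfolding H Imp by (blast+)
          then show ?thesis unfolding H Imp by (rule impR)
        next
          assume V2: "valid \<Gamma> H"
          have "derivI \<Gamma> H"
            apply (rule less.hyps)
            using pres_impR[where B=B and D=D and H=H and \<Gamma>=\<Gamma>] V2 C unfolding H Imp by (blast+)
          then show ?thesis by (rule subR) (simp add: H)
        qed
      qed
    next
      case False
      define v where "v = (\<lambda>p. Var p \<in># \<Gamma>)"
      have "\<forall>F\<in>#\<Gamma>. eval v F"
      proof
        fix F assume F: "F \<in># \<Gamma>"
        then obtain p where "F = Var p" using vars unfolding isVar_def by blast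
        then show "eval v F" using F unfolding v_def by simp
      qed
      then have "\<exists>D\<in>#\<Delta>. eval v D" using V[unfolded valid_def, rule_format, of v] by simp
      then obtain D where D: "D \<in># \<Delta>" "eval v D" by blast
      then have "isVar D" using False by blast
      then obtain p where "D = Var p" unfolding isVar_def by blast
      then have "Var p \<in># \<Gamma>" "Var p \<in># \<Delta>" using D unfolding v_def by simp_all
      then show ?thesis by (rule atomR)
    qed
  qed
qed

theorem mainTheorem2:
  fixes \<Gamma> :: "'a form multiset" and A :: "'a form"
  assumes "derives_c \<Gamma> A"
    and "(VnegM \<Gamma> \<union> Vpos A) \<inter> (Vpos_nsM \<Gamma> \<union> Vneg A) = {}"
  shows "derives_i \<Gamma> A"
proof -
  have "valid \<Gamma> {#A#}" using sound[OF assms(1)] unfolding valid_def by auto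
  moreover have "cond \<Gamma> {#A#}" using assms(2) unfolding cond_def by simp
  ultimately have "derivI \<Gamma> {#A#}" by (rule main)
  then have "(\<forall>D\<in>#{#A#}. nd False (add_mset D (\<Gamma>+{#})) A) \<longrightarrow> nd False (\<Gamma>+{#}) A"
    unfolding derivI_def by blast
  then show ?thesis by (simp add: nd.Ax)
qed

end
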